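(* Consider the bidding-club model described in the context, and an agent $i$ who belongs to a bidding club of size $k\ge 2$. Compare two situations. - Situation (a): agents play the equilibrium in which all invited agents accept and truthfully report their valuations, and singletons bid $b^e(v,P^{n,1})$ after the announcement $n$. - Situation (b): agent $i$'s bidding club does not exist, and its $k$ agents (including $i$) participate directly in the main auction as singleton bidders. In this situation all agents follow the same strategies as in (a): singletons bid $b^e(v,P^{n',1})$, where $n'$ is the announced number of registered bidders, and members of other clubs accept and report truthfully. Then agent $i$'s expected utility in situation (a) is higher than in situation (b).
   Context: A single indivisible good is sold by a first-price auction with participation revelation. The auction proceeds as follows: (i) agents register; (ii) the auctioneer announces the number $n$ of registered bidders; (iii) registered bidders submit sealed bids; (iv) the highest bidder wins and pays his bid, and all others pay $0$. There is no participation fee. Agents are risk-neutral with independent private valuations drawn i.i.d. from a continuous, atomless cumulative distribution function $F$ on the nonnegative reals. A winner with valuation $v$ paying $t$ gets utility $v-t$; a non-winner paying $t$ gets utility $-t$. For an integer $m\ge2$ define $b^e(v,m)=v-F(v)^{-(m-1)}\int_0^vF(u)^{m-1}du$. For a distribution $P=(p_j)$ on the number of agents define $b^e(v,P)=\sum_{j\ge2}p_jb^e(v,j)$. Write $P_{x\ge i}=\sum_{x\ge i}p_x$. Write $P<P'$ iff there is $l$ with $P_{x\ge i}=P'_{x\ge i}$ for all $i<l$ and $P_{x\ge i}<P'_{x\ge i}$ for all $i\ge l$. Standing assumption: $P<P'$ implies $b^e(v,P)<b^e(v,P')$ for all $v$. Environment. The number $n_c$ of potential coordinators has distribution $\gamma_C$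 with $\gamma_C(0)=\gamma_C(1)=0$. Independently, each potential coordinator is associated with a random number of agents with common distribution $\gamma_A$ on $\{1,\dots,\kappa\}$, where $\kappa\ge2$, $\gamma_A(0)=0$ and $\gamma_A(1)<1$. - A potential coordinator with one agent yields a singleton bidder. - A potential coordinator with at least two agents is a bidding club whose agents are all invited. Each agent privately knows his valuation and his club size $s_i$ ($1$ for singletons). All of this is common knowledge. $P^{n,k}$ denotes the distribution of $k+X_1+\dots+X_{n-1}$, where the $X_j$ are i.i.d. with distribution $\gamma_A$. Coordinator protocol for a club of $k$ invited agents: - Each agent declines (and bids independently) or accepts and reports a binding valuation $\mu_i$. - If some agent declines, every accepting agent is registered. After the announcement $n$, the coordinator bids $b^e(\mu_i,P^{n,k})$ for each accepting agent $i$. - If all accept, only the highest reporter $h$ is registered, with bid $b^e(\mu_h,P^{n,1})$. If $h$ wins, he pays that bid to the auctioneer plus $b^e(\mu_h,P^{n,k})-b^e(\mu_h,P^{n,1})$ to the coordinator. *)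

theory Defs
  imports "HOL-Probability.Probability"
begin

text \<open>Equilibrium bid of a first-price auction with m bidders:
  b^e(v,m) = v - F(v)^(-(m-1)) * integral_0^v F(u)^(m-1) du.\<close>
definition be :: "(real \<Rightarrow> real) \<Rightarrow> real \<Rightarrow> nat \<Rightarrow> real" where
  "be F v m = v - inverse (F v ^ (m - 1)) * integral {0..v} (\<lambda>u. F u ^ (m - 1))"

definition beP :: "(real \<Rightarrow> real) \<Rightarrow> real \<Rightarrow> nat pmf \<Rightarrow> real" where
  "beP F v P = infsum (\<lambda>j. pmf P j * be F v j) {2..}"

definition tail :: "nat pmf \<Rightarrow> nat \<Rightarrow> real" where
  "tail P i = measure_pmf.prob P {i..}"

definition dist_less :: "nat pmf \<Rightarrow> nat pmf \<Rightarrow> bool" where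
  "dist_less P P' \<longleftrightarrow> (\<exists>l. (\<forall>i<l. tail P i = tail P' i) \<and> 0 < tail P' l \<and>
      (\<forall>i\<ge>l. tail P i < tail P' i \<or> (tail P i = 0 \<and> tail P' i = 0)))"

fun sum_iid :: "nat pmf \<Rightarrow> nat \<Rightarrow> nat pmf" where
  "sum_iid g 0 = return_pmf 0"
| "sum_iid g (Suc m) = bind_pmf (sum_iid g m) (\<lambda>s. map_pmf (\<lambda>x. s + x) g)"

definition Pnk :: "nat pmf \<Rightarrow> nat \<Rightarrow> nat \<Rightarrow> nat pmf" where
  "Pnk gA n k = map_pmf (\<lambda>s. k + s) (sum_iid gA (n - 1))"

text \<open>Random environment as seen by agent i (whose club has size k):
  (nc, sz, vals, mates) where nc ~ gamma_C is the number of potential coordinators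
  (agent i's coordinator being one of them), sz j ~ gamma_A (i.i.d.) is the number of
  agents of the j-th other coordinator (j < nc - 1), vals j t ~ F (i.i.d.) the valuation of
  its t-th agent (t < sz j), and mates t ~ F (i.i.d.) the valuation of i's t-th club-mate
  (t < k - 1).\<close>
type_synonym env_state = "nat \<times> (nat \<Rightarrow> nat) \<times> (nat \<Rightarrow> nat \<Rightarrow> real) \<times> (nat \<Rightarrow> real)"

definition env :: "nat pmf \<Rightarrow> nat pmf \<Rightarrow> real measure \<Rightarrow> env_state measure" where
  "env gC gA M = measure_pmf gC \<Otimes>\<^sub>M (PiM UNIV (\<lambda>_::nat. measure_pmf gA) \<Otimes>\<^sub>M
      (PiM UNIV (\<lambda>_::nat. PiM UNIV (\<lambda>_::nat. M)) \<Otimes>\<^sub>M PiM UNIV (\<lambda>_::nat. M)))"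

text \<open>Every coordinator
  registers exactly one bidder (singleton or highest reporter of its club), so n = nc. Agent i is registered iff he is the highest reporter of his club; if he wins he pays
  his bid to the auctioneer and b^e(v,P^{n,k}) - b^e(v,P^{n,1}) to the coordinator.
  Ties (a null event) are resolved against agent i.\<close>
definition util_a :: "(real \<Rightarrow> real) \<Rightarrow> nat pmf \<Rightarrow> nat \<Rightarrow> real \<Rightarrow> env_state \<Rightarrow> real" where
  "util_a F gA k v \<omega> = (case \<omega> of (nc, sz, vals, mates) \<Rightarrow>
     let n = nc;
         bid = (\<lambda>w. beP F w (Pnk gA n 1));
         registered = (\<forall>t<k - 1. mates t < v);
         others = {bid (Max (vals j ` {..<sz j})) | j. j < nc - 1};
         wins = (registered \<and> (\<forall>b\<in>others. b < bid v));
         pay_auct = (if wins then bid v else 0);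
         pay_coord = (if wins then beP F v (Pnk gA n k) - bid v else 0)
     in (if wins then v else 0) - pay_auct - pay_coord)"

definition util_b :: "(real \<Rightarrow> real) \<Rightarrow> nat pmf \<Rightarrow> nat \<Rightarrow> real \<Rightarrow> env_state \<Rightarrow> real" where
  "util_b F gA k v \<omega> = (case \<omega> of (nc, sz, vals, mates) \<Rightarrow>
     let n' = (nc - 1) + k;
         bid = (\<lambda>w. beP F w (Pnk gA n' 1));
         others = {bid (Max (vals j ` {..<sz j})) | j. j < nc - 1}
                  \<union> {bid (mates t) | t. t < k - 1};
         wins = (\<forall>b\<in>others. b < bid v)
     in if wins then v - bid v else 0)"

end

theory Submission
  imports Defs
begin
lemma Fn_int:
  fixes F :: "real \<Rightarrow> real"
  assumes c: "\<forall>x. isCont F x"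
  shows "(\<lambda>u. (F u::real) ^ n) integrable_on {a..b}"
proof -
  have "continuous_on UNIV F" using c by (simp add: continuous_at_imp_continuous_on)
  then have "continuous_on {a..b} (\<lambda>u. F u ^ n)"
    by (intro continuous_on_power) (auto intro: continuous_on_subset)
  then show ?thesis by (rule Henstock_Kurzweil_Integration.integrable_continuous_interval)
qed

lemma Fn_le:
  fixes F :: "real \<Rightarrow> real"
  assumes c: "\<forall>x. isCont F x" and m: "mono F" and nn: "\<forall>x. 0 \<le> F x" and ab: "a \<le> b"
  shows "integral {a..b} (\<lambda>u. (F u::real) ^ n) \<le> (b - a) * F b ^ n"
proof -
  have "integral {a..b} (\<lambda>u. (F u::real) ^ n) \<le> integral {a..b} (\<lambda>u. F b ^ n)"
    apply (rule integral_le[OF Fn_int[OF c]])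
     apply (simp add: integrable_const_ivl)
    using m nn by (auto intro!: power_mono simp: mono_def)
  then show ?thesis using ab by simp
qed

lemma Fn_nonneg:
  fixes F :: "real \<Rightarrow> real"
  assumes c: "\<forall>x. isCont F x" and nn: "\<forall>x. 0 \<le> F x"
  shows "0 \<le> integral {a..b} (\<lambda>u. (F u::real) ^ n)"
  by (rule integral_nonneg[OF Fn_int[OF c]]) (use nn in auto)

lemma Fn_lt:
  fixes F :: "real \<Rightarrow> real"
  assumes c: "\<forall>x. isCont F x" and m: "mono F" and nn: "\<forall>x. 0 \<le> F x" and ab: "a < b"
    and Fab: "F a < F b" and n: "n \<ge> 1"
  shows "integral {a..b} (\<lambda>u. (F u::real) ^ n) < (b - a) * F b ^ n"
proof -
  have "\<forall>\<^sub>F u in at a. F u < F b"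
    using c Fab by (metis isCont_def order_tendstoD(2) tendsto_mono at_le UNIV_I subsetI)
  then obtain d where d: "d > 0" "\<And>u. u \<noteq> a \<Longrightarrow> dist u a < d \<Longrightarrow> F u < F b"
    unfolding eventually_at by blast
  define e where "e = a + min (d/2) ((b-a)/2)"
  have m1: "min (d/2) ((b-a)/2) \<le> (b-a)/2" by (rule min.cobounded2)
  have m2: "0 < min (d/2) ((b-a)/2)" using d ab by auto
  have e1a: "a < e" unfolding e_def using m2 by simp
  have "e \<le> a + (b-a)/2" unfolding e_def using m1 by simp
  moreover have "a + (b-a)/2 < b" using ab by (simp add: field_simps)
  ultimately have e1b: "e < b" by linarith
  note e1 = e1a e1b
  have "dist e a < d" using d ab unfolding e_def by (auto simp: dist_real_def)
  then have e2: "F e < F b" using d(2)[of e] e1 by auto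
  note e = e1 e2
  have "integral {a..b} (\<lambda>u. (F u::real) ^ n) = integral {a..e} (\<lambda>u. (F u::real) ^ n) + integral {e..b} (\<lambda>u. (F u::real) ^ n)"
    using Henstock_Kurzweil_Integration.integral_combine[OF _ _ Fn_int[OF c], of a e b n] e by simp
  also have "\<dots> \<le> (e - a) * F e ^ n + (b - e) * F b ^ n"
    using Fn_le[OF c m nn, of a e n] Fn_le[OF c m nn, of e b n] e by simp
  also have "\<dots> < (e - a) * F b ^ n + (b - e) * F b ^ n"
  proof -
    have "F e ^ n < F b ^ n" using e nn n by (intro power_strict_mono) auto
    then show ?thesis using e by simp
  qed
  also have "\<dots> = (b - a) * F b ^ n" by (simp add: algebra_simps)
  finally show ?thesis .
qed

lemma be_diff:
  fixes F :: "real \<Rightarrow> real"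
  assumes c: "\<forall>x. isCont F x" and ab: "0 \<le> a" "a \<le> b"
  shows "be F b m - be F a m = (b - a) - integral {a..b} (\<lambda>u. F u ^ (m-1)) * inverse (F b ^ (m-1))
     + integral {0..a} (\<lambda>u. F u ^ (m-1)) * (inverse (F a ^ (m-1)) - inverse (F b ^ (m-1)))"
proof -
  have "integral {0..b} (\<lambda>u. F u ^ (m-1)) = integral {0..a} (\<lambda>u. F u ^ (m-1)) + integral {a..b} (\<lambda>u. F u ^ (m-1))"
    using Henstock_Kurzweil_Integration.integral_combine[OF _ _ Fn_int[OF c], of 0 a b "m-1"] ab by simp
  then show ?thesis unfolding be_def by (simp add: algebra_simps)
qed

lemma inv_mul_lt: "0 < (P::real) \<Longrightarrow> I < c * P \<Longrightarrow> inverse P * I < c"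
proof -
  assume a: "0 < P" "I < c * P"
  then have "inverse P * I < inverse P * (c * P)" by (intro mult_strict_left_mono) auto
  also have "\<dots> = c" using a(1) by simp
  finally show ?thesis .
qed
lemma inv_mul_le: "0 < (P::real) \<Longrightarrow> I \<le> c * P \<Longrightarrow> inverse P * I \<le> c"
proof -
  assume a: "0 < P" "I \<le> c * P"
  then have "inverse P * I \<le> inverse P * (c * P)" by (intro mult_left_mono) auto
  also have "\<dots> = c" using a(1) by simp
  finally show ?thesis .
qed

lemma be_bounds:
  fixes F :: "real \<Rightarrow> real"
  assumes c: "\<forall>x. isCont F x" and m: "mono F" and nn: "\<forall>x. 0 \<le> F x" and v: "0 \<le> v"
  shows "0 \<le> be F v j \<and> be F v j \<le> v"
proof -
  let ?G = "integral {0..v} (\<lambda>u. F u ^ (j-1))"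
  have G0: "0 \<le> ?G" by (rule Fn_nonneg[OF c nn])
  have G1: "?G \<le> v * F v ^ (j-1)" using Fn_le[OF c m nn v, of "j-1"] by simp
  show ?thesis
  proof (cases "F v ^ (j-1) = 0")
    case True
    then have "inverse (F v ^ (j-1)) = 0" by simp
    then show ?thesis using v by (simp add: be_def zero_power)
  next
    case False
    then have pos: "0 < F v ^ (j-1)" using nn by (simp add: order_le_neq_trans)
    have "inverse (F v ^ (j-1)) * ?G \<le> v"
      using G1 pos by (simp add: field_simps)
    moreover have "0 \<le> inverse (F v ^ (j-1)) * ?G" using G0 pos by simp
    ultimately show ?thesis by (simp add: be_def)
  qed
qed

lemma third_nonneg:
  fixes F :: "real \<Rightarrow> real"
  assumes c: "\<forall>x. isCont F x" and m: "mono F" and nn: "\<forall>x. 0 \<le> F x"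
    and a: "0 \<le> a" "a \<le> b" and Fb: "0 < F b"
  shows "0 \<le> integral {0..a} (\<lambda>u. F u ^ n) * (inverse (F a ^ n) - inverse (F b ^ n))"
proof (cases "F a = 0 \<and> n > 0")
  case True
  have "integral {0..a} (\<lambda>u. F u ^ n) \<le> 0"
    using Fn_le[OF c m nn a(1), of n] True by (auto simp: zero_power)
  then have "integral {0..a} (\<lambda>u. F u ^ n) = 0" using Fn_nonneg[OF c nn, of 0 a n] by simp
  then show ?thesis by simp
next
  case False
  show ?thesis
  proof (cases "n = 0")
    case True then show ?thesis by simp
  next
  case False
  then have "0 < F a" using nn \<open>\<not> (F a = 0 \<and> n > 0)\<close> by (simp add: order_le_neq_trans)
  moreover have "F a \<le> F b" using m a by (simp add: mono_def)
  ultimately have "F a ^ n \<le> F b ^ n" "0 < F a ^ n" by (auto intro: power_mono)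
  then have "inverse (F b ^ n) \<le> inverse (F a ^ n)" by (simp add: le_imp_inverse_le)
  then show ?thesis using Fn_nonneg[OF c nn, of 0 a n] by simp
  qed
qed

lemma be_strict:
  fixes F :: "real \<Rightarrow> real"
  assumes c: "\<forall>x. isCont F x" and m: "mono F" and nn: "\<forall>x. 0 \<le> F x" and neg: "\<forall>x<0. F x = 0"
    and j: "2 \<le> j" and Fv: "0 < F v" and lt: "F x < F v"
  shows "be F x j < be F v j"
proof -
  have v0: "0 \<le> v" using neg Fv by (metis less_irrefl not_le)
  have xv: "x < v" using lt m by (metis mono_def not_le order.strict_iff_not)
  show ?thesis
  proof (cases "x < 0")
    case True
    then have "be F x j = x" using neg j by (simp add: be_def)
    then show ?thesis using be_bounds[OF c m nn v0, of j] True by simp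
  next
    case False
    then have x0: "0 \<le> x" by simp
    have I: "integral {x..v} (\<lambda>u. F u ^ (j-1)) < (v - x) * F v ^ (j-1)"
      using Fn_lt[OF c m nn xv lt] j by simp
    have pos: "0 < F v ^ (j-1)" using Fv by simp
    have "integral {x..v} (\<lambda>u. F u ^ (j-1)) * inverse (F v ^ (j-1)) < v - x"
      using inv_mul_lt[OF pos I] by (simp add: mult.commute)
    moreover have "0 \<le> integral {0..x} (\<lambda>u. F u ^ (j-1)) * (inverse (F x ^ (j-1)) - inverse (F v ^ (j-1)))"
      by (rule third_nonneg[OF c m nn x0 less_imp_le[OF xv] Fv])
    ultimately show ?thesis using be_diff[OF c x0 less_imp_le[OF xv], of j] by linarith
  qed
qed

lemma be_weak:
  fixes F :: "real \<Rightarrow> real"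
  assumes c: "\<forall>x. isCont F x" and m: "mono F" and nn: "\<forall>x. 0 \<le> F x" and neg: "\<forall>x<0. F x = 0"
    and Fv: "0 < F v" and le: "F v \<le> F x"
  shows "be F v j \<le> be F x j"
proof -
  have v0: "0 \<le> v" using neg Fv by (metis less_irrefl not_le)
  show ?thesis
  proof (cases "v \<le> x")
    case True
    have Fx: "0 < F x" using Fv le by simp
    have I: "integral {v..x} (\<lambda>u. F u ^ (j-1)) \<le> (x - v) * F x ^ (j-1)"
      using Fn_le[OF c m nn True] by simp
    have pos: "0 < F x ^ (j-1)" using Fx by simp
    have "integral {v..x} (\<lambda>u. F u ^ (j-1)) * inverse (F x ^ (j-1)) \<le> x - v"
      using inv_mul_le[OF pos I] by (simp add: mult.commute)
    moreover have "0 \<le> integral {0..v} (\<lambda>u. F u ^ (j-1)) * (inverse (F v ^ (j-1)) - inverse (F x ^ (j-1)))"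
      by (rule third_nonneg[OF c m nn v0 True Fx])
    ultimately show ?thesis using be_diff[OF c v0 True, of j] by linarith
  next
    case False
    then have xv: "x \<le> v" by simp
    have "F x \<le> F v" using m xv by (simp add: mono_def)
    then have Fxv: "F x = F v" using le by (rule antisym)
    have x0: "0 \<le> x"
    proof (rule ccontr)
      assume "\<not> 0 \<le> x" then have "F x = 0" using neg by simp
      then show False using Fv Fxv by simp
    qed
    have const: "\<And>u. u \<in> {x..v} \<Longrightarrow> F u = F v"
    proof -
      fix u assume "u \<in> {x..v}"
      then have "F x \<le> F u" "F u \<le> F v" using m by (auto simp: mono_def)
      then show "F u = F v" using Fxv by simp
    qed
    have "integral {x..v} (\<lambda>u. F u ^ (j-1)) = integral {x..v} (\<lambda>u. F v ^ (j-1))"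
    proof (rule integral_cong)
      fix u assume "u \<in> {x..v}"
      then have "F u = F v" by (rule const)
      then show "F u ^ (j-1) = F v ^ (j-1)" by simp
    qed
    also have "\<dots> = (v - x) * F v ^ (j-1)" using xv by simp
    finally have I: "integral {x..v} (\<lambda>u. F u ^ (j-1)) * inverse (F v ^ (j-1)) = v - x"
      using Fv by simp
    have "be F v j - be F x j = 0"
      using be_diff[OF c x0 xv, of j] I Fxv by simp
    then show ?thesis by simp
  qed
qed

lemma beP_fin:
  assumes "finite (set_pmf P)"
  shows "beP F w P = (\<Sum>j\<in>set_pmf P \<inter> {2..}. pmf P j * be F w j)"
proof -
  have "beP F w P = infsum (\<lambda>j. pmf P j * be F w j) (set_pmf P \<inter> {2..})"
    unfolding beP_def by (rule infsum_cong_neutral) (auto simp: set_pmf_eq)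
  then show ?thesis using assms by simp
qed

lemma sum_pmf_le1: "finite S \<Longrightarrow> (\<Sum>j\<in>S. pmf P j) \<le> 1"
  by (metis measure_measure_pmf_finite measure_pmf.subprob_measure_le_1)

lemma beP_bounds:
  fixes F :: "real \<Rightarrow> real"
  assumes c: "\<forall>x. isCont F x" and m: "mono F" and nn: "\<forall>x. 0 \<le> F x" and v: "0 \<le> v"
    and fin: "finite (set_pmf P)"
  shows "0 \<le> beP F v P \<and> beP F v P \<le> v"
proof -
  let ?S = "set_pmf P \<inter> {2..}"
  have "(\<Sum>j\<in>?S. pmf P j * be F v j) \<le> (\<Sum>j\<in>?S. pmf P j * v)"
    using be_bounds[OF c m nn v] by (intro sum_mono mult_left_mono) auto
  also have "\<dots> = v * (\<Sum>j\<in>?S. pmf P j)" by (simp add: sum_distrib_left mult.commute)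
  also have "\<dots> \<le> v * 1" using sum_pmf_le1[of ?S P] fin v by (intro mult_left_mono) auto
  finally have 1: "(\<Sum>j\<in>?S. pmf P j * be F v j) \<le> v" by simp
  have 2: "0 \<le> (\<Sum>j\<in>?S. pmf P j * be F v j)"
    using be_bounds[OF c m nn v] by (intro sum_nonneg) auto
  show ?thesis using 1 2 beP_fin[OF fin] by simp
qed

lemma beP_iff:
  fixes F :: "real \<Rightarrow> real"
  assumes c: "\<forall>x. isCont F x" and m: "mono F" and nn: "\<forall>x. 0 \<le> F x" and neg: "\<forall>x<0. F x = 0"
    and fin: "finite (set_pmf P)" and sub: "set_pmf P \<subseteq> {2..}" and Fv: "0 < F v"
  shows "beP F x P < beP F v P \<longleftrightarrow> F x < F v"
proof -
  have S: "set_pmf P \<inter> {2..} = set_pmf P" using sub by auto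
  have bx: "beP F x P = (\<Sum>j\<in>set_pmf P. pmf P j * be F x j)" using beP_fin[OF fin] S by simp
  have bv: "beP F v P = (\<Sum>j\<in>set_pmf P. pmf P j * be F v j)" using beP_fin[OF fin] S by simp
  show ?thesis
  proof
    assume lt: "F x < F v"
    show "beP F x P < beP F v P" unfolding bx bv
    proof (rule sum_strict_mono[OF fin])
      show "set_pmf P \<noteq> {}" by (rule set_pmf_not_empty)
      fix j assume j: "j \<in> set_pmf P"
      then have "2 \<le> j" "0 < pmf P j" using sub by (auto simp: pmf_positive)
      then show "pmf P j * be F x j < pmf P j * be F v j"
        using be_strict[OF c m nn neg _ Fv lt] by simp
    qed
  next
    assume lt: "beP F x P < beP F v P"
    show "F x < F v"
    proof (rule ccontr)
      assume "\<not> F x < F v"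
      then have "F v \<le> F x" by simp
      then have "beP F v P \<le> beP F x P" unfolding bx bv
        using be_weak[OF c m nn neg Fv] by (intro sum_mono mult_left_mono) auto
      then show False using lt by simp
    qed
  qed
qed

lemma measure_bind_fin:
  assumes fin: "finite (set_pmf Q)"
  shows "measure (measure_pmf (bind_pmf Q f)) A = (\<Sum>q\<in>set_pmf Q. pmf Q q * measure (measure_pmf (f q)) A)"
proof -
  have "ennreal (measure (measure_pmf (bind_pmf Q f)) A) = emeasure (measure_pmf (bind_pmf Q f)) A"
    by (simp add: measure_pmf.emeasure_eq_measure)
  also have "\<dots> = (\<integral>\<^sup>+q. emeasure (measure_pmf (f q)) A \<partial>measure_pmf Q)" by simp
  also have "\<dots> = (\<Sum>q\<in>set_pmf Q. emeasure (measure_pmf (f q)) A * pmf Q q)"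
    by (rule nn_integral_measure_pmf_finite[OF fin]) simp
  also have "\<dots> = (\<Sum>q\<in>set_pmf Q. ennreal (pmf Q q * measure (measure_pmf (f q)) A))"
    by (intro sum.cong refl) (simp add: measure_pmf.emeasure_eq_measure ennreal_mult'' mult.commute)
  also have "\<dots> = ennreal (\<Sum>q\<in>set_pmf Q. pmf Q q * measure (measure_pmf (f q)) A)"
    by (rule sum_ennreal) simp
  finally show ?thesis by (subst (asm) ennreal_inj) (auto intro: sum_nonneg)
qed

lemma measure_fin:
  assumes fin: "finite (set_pmf Q)"
  shows "measure (measure_pmf Q) A = (\<Sum>q\<in>set_pmf Q. pmf Q q * indicator A q)"
proof -
  have "measure (measure_pmf Q) A = measure (measure_pmf (bind_pmf Q return_pmf)) A"
    by (simp add: bind_return_pmf')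
  also have "\<dots> = (\<Sum>q\<in>set_pmf Q. pmf Q q * measure (measure_pmf (return_pmf q)) A)"
    by (rule measure_bind_fin[OF fin])
  finally show ?thesis by (simp add: measure_return)
qed

definition gap :: "nat \<Rightarrow> nat set \<Rightarrow> bool" where
  "gap D A \<longleftrightarrow> (\<forall>a\<in>A. (\<exists>b\<in>A. a < b) \<longrightarrow> (\<exists>b\<in>A. a < b \<and> b \<le> a + D))"

lemma prob1: "set_pmf g \<subseteq> A \<Longrightarrow> measure (measure_pmf g) A = 1"
  by (subst measure_pmf.prob_eq_1) (auto simp: AE_measure_pmf_iff)

lemma set_sum_iid_Suc:
  "set_pmf (sum_iid g (Suc m)) = (\<Union>s\<in>set_pmf (sum_iid g m). (\<lambda>x. s + x) ` set_pmf g)"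
  by simp

lemma fin_sum_iid: "finite (set_pmf g) \<Longrightarrow> finite (set_pmf (sum_iid g m))"
  by (induction m) auto

lemma ge_sum_iid: "set_pmf g \<subseteq> {1..} \<Longrightarrow> s \<in> set_pmf (sum_iid g m) \<Longrightarrow> m \<le> s"
proof (induction m arbitrary: s)
  case 0 then show ?case by simp
next
  case (Suc m)
  then obtain s' x where "s' \<in> set_pmf (sum_iid g m)" "x \<in> set_pmf g" "s = s' + x" by auto
  then show ?case using Suc.IH[of s'] Suc.prems by force
qed

lemma gap_sumset:
  assumes A: "gap D A" and B: "gap D B"
  shows "gap D (\<Union>a\<in>A. (\<lambda>b. a + b) ` B)"
  unfolding gap_def
proof (intro ballI impI)
  fix c assume c: "c \<in> (\<Union>a\<in>A. (\<lambda>b. a + b) ` B)" and ex: "\<exists>d\<in>(\<Union>a\<in>A. (\<lambda>b. a + b) ` B). c < d"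
  from c obtain a b where ab: "a \<in> A" "b \<in> B" "c = a + b" by auto
  from ex obtain a' b' where ab': "a' \<in> A" "b' \<in> B" "c < a' + b'" by auto
  show "\<exists>d\<in>(\<Union>a\<in>A. (\<lambda>b. a + b) ` B). c < d \<and> d \<le> c + D"
  proof (cases "\<exists>a2\<in>A. a < a2")
    case True
    then obtain a3 where "a3 \<in> A" "a < a3" "a3 \<le> a + D" using A ab unfolding gap_def by blast
    then show ?thesis using ab by (intro bexI[of _ "a3 + b"]) auto
  next
    case False
    then have "a' \<le> a" using ab' by (meson not_le)
    then have "b < b'" using ab ab' by linarith
    then obtain b3 where "b3 \<in> B" "b < b3" "b3 \<le> b + D" using B ab ab' unfolding gap_def by blast
    then show ?thesis using ab by (intro bexI[of _ "a + b3"]) auto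
  qed
qed

lemma gap_shift: "gap D A \<Longrightarrow> gap D ((\<lambda>s. c + s) ` A)"
  unfolding gap_def by fastforce

lemma gap_g:
  assumes g1: "set_pmf g \<subseteq> {1..}" and fin: "finite (set_pmf g)"
  shows "gap (Max (set_pmf g) - 1) (set_pmf g)"
  unfolding gap_def
proof (intro ballI impI)
  fix a assume a: "a \<in> set_pmf g" and "\<exists>b\<in>set_pmf g. a < b"
  then obtain b where b: "b \<in> set_pmf g" "a < b" by blast
  have "b \<le> Max (set_pmf g)" using fin b by simp
  moreover have "1 \<le> a" using a g1 by auto
  moreover have "Max (set_pmf g) \<in> set_pmf g" using fin b by (intro Max_in) auto
  ultimately show "\<exists>b\<in>set_pmf g. a < b \<and> b \<le> a + (Max (set_pmf g) - 1)"
    using b by (intro bexI[of _ "Max (set_pmf g)"]) auto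
qed

lemma gap_sum_iid:
  assumes "gap D (set_pmf g)"
  shows "gap D (set_pmf (sum_iid g m))"
proof (induction m)
  case 0 then show ?case by (simp add: gap_def)
next
  case (Suc m)
  then show ?case using gap_sumset[OF Suc assms] by simp
qed

lemma step_dist_less:
  fixes Q g :: "nat pmf"
  defines "R \<equiv> bind_pmf Q (\<lambda>q. map_pmf (\<lambda>x. q + x - 1) g)"
  defines "M \<equiv> Max (set_pmf g)"
  assumes finQ: "finite (set_pmf Q)" and gapQ: "gap (M - 1) (set_pmf Q)"
    and g1: "set_pmf g \<subseteq> {1..}" and fing: "finite (set_pmf g)" and M2: "2 \<le> M"
  shows "dist_less Q R"
proof -
  let ?SQ = "set_pmf Q"
  let ?h = "\<lambda>i q. measure (measure_pmf g) {x. i \<le> q + x - 1}"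
  have tR: "tail R i = (\<Sum>q\<in>?SQ. pmf Q q * ?h i q)" for i
    unfolding tail_def R_def by (subst measure_bind_fin[OF finQ]) (simp add: vimage_def)
  have tQ: "tail Q i = (\<Sum>q\<in>?SQ. pmf Q q * indicator {i..} q)" for i
    unfolding tail_def by (rule measure_fin[OF finQ])
  have Min: "M \<in> set_pmf g" unfolding M_def using fing set_pmf_not_empty by (intro Max_in) auto
  have hge: "indicator {i..} q \<le> ?h i q" for i q
  proof (cases "i \<le> q")
    case True
    then have "?h i q = 1" using g1 by (intro prob1) auto
    then show ?thesis by (simp add: indicator_def)
  next
    case False then show ?thesis by simp
  qed
  have heq: "i \<le> q \<Longrightarrow> indicator {i..} q = ?h i q" for i q
  proof -
    assume "i \<le> q"
    then have "?h i q = 1" using g1 by (intro prob1) auto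
    then show ?thesis using \<open>i \<le> q\<close> by (simp add: indicator_def)
  qed
  have hlt: "q < i \<Longrightarrow> i \<le> q + M - 1 \<Longrightarrow> indicator {i..} q < ?h i q" for i q
  proof -
    assume a: "q < i" "i \<le> q + M - 1"
    have "pmf g M \<le> ?h i q"
      unfolding measure_pmf_single[symmetric] using a
      by (intro measure_pmf.finite_measure_mono) auto
    moreover have "0 < pmf g M" using Min by (simp add: pmf_positive)
    ultimately show ?thesis using a by simp
  qed
  have tle: "tail Q i \<le> tail R i" for i
    unfolding tQ tR by (intro sum_mono mult_left_mono hge) auto
  have tlt: "tail Q i < tail R i" if q: "q \<in> ?SQ" "q < i" "i \<le> q + M - 1" for i q
    unfolding tQ tR
  proof (rule sum_strict_mono_ex1[OF finQ])
    show "\<forall>x\<in>?SQ. pmf Q x * indicator {i..} x \<le> pmf Q x * ?h i x"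
      by (intro ballI mult_left_mono hge) auto
    show "\<exists>a\<in>?SQ. pmf Q a * indicator {i..} a < pmf Q a * ?h i a"
      using q hlt[OF q(2,3)] by (intro bexI[of _ q]) (auto simp: pmf_positive)
  qed
  define q0 where "q0 = Min ?SQ"
  have q0: "q0 \<in> ?SQ" "\<And>q. q \<in> ?SQ \<Longrightarrow> q0 \<le> q"
    unfolding q0_def using finQ set_pmf_not_empty[of Q] by auto
  show ?thesis
    unfolding dist_less_def
  proof (intro exI[of _ "q0 + 1"] conjI allI impI)
    fix i assume "i < q0 + 1"
    then have "\<And>q. q \<in> ?SQ \<Longrightarrow> i \<le> q" using q0 by fastforce
    then show "tail Q i = tail R i" unfolding tQ tR
      by (intro sum.cong refl) (metis heq)
  next
    have "tail Q (q0 + 1) < tail R (q0 + 1)" using M2 by (intro tlt[OF q0(1)]) auto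
    moreover have "0 \<le> tail Q (q0 + 1)" unfolding tail_def by simp
    ultimately show "0 < tail R (q0 + 1)" by simp
  next
    fix i assume i: "q0 + 1 \<le> i"
    show "tail Q i < tail R i \<or> (tail Q i = 0 \<and> tail R i = 0)"
    proof (cases "tail Q i = 0")
      case True
      then show ?thesis using tle[of i] by auto
    next
      case False
      have "\<exists>q'\<in>?SQ. i \<le> q'"
      proof (rule ccontr)
        assume "\<not> ?thesis"
        then have "tail Q i = 0" unfolding tQ by (intro sum.neutral) auto
        then show False using False by simp
      qed
      then obtain q' where q': "q' \<in> ?SQ" "i \<le> q'" by blast
      define L where "L = {q\<in>?SQ. q < i}"
      have finL: "finite L" "L \<noteq> {}" unfolding L_def using finQ q0 i by auto
      define q where "q = Max L"
      have qL: "q \<in> L" unfolding q_def using finL by simp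
      have qmax: "\<And>b. b \<in> L \<Longrightarrow> b \<le> q" unfolding q_def using finL by simp
      have "q \<in> ?SQ" "q < i" using qL unfolding L_def by auto
      then obtain b where b: "b \<in> ?SQ" "q < b" "b \<le> q + (M - 1)"
        using gapQ q' unfolding gap_def by (meson less_le_trans)
      have "i \<le> b"
      proof (rule ccontr)
        assume "\<not> i \<le> b"
        then have "b \<in> L" using b unfolding L_def by auto
        then show False using qmax b by fastforce
      qed
      then have "i \<le> q + M - 1" using b M2 by linarith
      then show ?thesis using tlt[OF \<open>q \<in> ?SQ\<close> \<open>q < i\<close>] by simp
    qed
  qed
qed

lemma chain_step_eq:
  assumes "j < k - 1"
  shows "map_pmf (\<lambda>s. (k - Suc j) + s) (sum_iid g (m + Suc j)) =
         bind_pmf (map_pmf (\<lambda>s. (k - j) + s) (sum_iid g (m + j))) (\<lambda>q. map_pmf (\<lambda>x. q + x - 1) g)"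
proof -
  have "map_pmf (\<lambda>s. (k - Suc j) + s) (sum_iid g (m + Suc j)) =
        bind_pmf (sum_iid g (m + j)) (\<lambda>s. map_pmf (\<lambda>x. (k - Suc j) + (s + x)) g)"
    by (simp add: map_bind_pmf map_pmf_comp)
  also have "\<dots> = bind_pmf (sum_iid g (m + j)) (\<lambda>s. map_pmf (\<lambda>x. (k - j) + s + x - 1) g)"
    using assms by (intro bind_pmf_cong refl map_pmf_cong) auto
  also have "\<dots> = bind_pmf (map_pmf (\<lambda>s. (k - j) + s) (sum_iid g (m + j))) (\<lambda>q. map_pmf (\<lambda>x. q + x - 1) g)"
    by (simp add: bind_map_pmf)
  finally show ?thesis .
qed

lemma Pnk_less:
  fixes F :: "real \<Rightarrow> real"
  assumes H: "\<And>P P'. set_pmf P \<subseteq> {2..} \<Longrightarrow> set_pmf P' \<subseteq> {2..} \<Longrightarrow> dist_less P P' \<Longrightarrow> beP F w P < beP F w P'"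
    and g1: "set_pmf g \<subseteq> {1..}" and fing: "finite (set_pmf g)" and M2: "2 \<le> Max (set_pmf g)"
    and n: "1 \<le> n" and k: "2 \<le> k"
  shows "beP F w (Pnk g n k) < beP F w (Pnk g (n - 1 + k) 1)"
proof -
  define R where "R j = map_pmf (\<lambda>s. (k - j) + s) (sum_iid g (n - 1 + j))" for j
  have sub: "set_pmf (R j) \<subseteq> {2..}" if "j \<le> k - 1" for j
  proof
    fix r assume "r \<in> set_pmf (R j)"
    then obtain s where "s \<in> set_pmf (sum_iid g (n - 1 + j))" "r = (k - j) + s" unfolding R_def by auto
    then show "r \<in> {2..}" using ge_sum_iid[OF g1] that n k by fastforce
  qed
  have step: "beP F w (R j) < beP F w (R (Suc j))" if "j < k - 1" for j
  proof (rule H)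
    show "set_pmf (R j) \<subseteq> {2..}" "set_pmf (R (Suc j)) \<subseteq> {2..}" using sub that by auto
    have eq: "R (Suc j) = bind_pmf (R j) (\<lambda>q. map_pmf (\<lambda>x. q + x - 1) g)"
      unfolding R_def using chain_step_eq[OF that, of g "n - 1"] by simp
    have gapR: "gap (Max (set_pmf g) - 1) (set_pmf (R j))"
      unfolding R_def using gap_shift[OF gap_sum_iid[OF gap_g[OF g1 fing]]] by simp
    show "dist_less (R j) (R (Suc j))"
      unfolding eq
      by (rule step_dist_less[OF _ gapR g1 fing M2]) (simp add: R_def fin_sum_iid[OF fing])
  qed
  have chain: "beP F w (R 0) < beP F w (R (Suc j))" if "j < k - 1" for j
    using that
  proof (induction j)
    case 0 then show ?case using step by simp
  next
    case (Suc j)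
    then show ?case using step[of "Suc j"] by simp
  qed
  have "R 0 = Pnk g n k" unfolding R_def Pnk_def by simp
  moreover have "R (Suc (k - 2)) = Pnk g (n - 1 + k) 1"
    unfolding R_def Pnk_def using k n by (simp add: Suc_diff_Suc numeral_2_eq_2)
  ultimately show ?thesis using chain[of "k - 2"] k by simp
qed

definition Acond :: "(real \<Rightarrow> real) \<Rightarrow> real \<Rightarrow> nat \<Rightarrow> (nat \<Rightarrow> real) \<Rightarrow> bool" where
  "Acond F v s f = (if s = 0 then F (Max ({}::real set)) < F v else (\<forall>t<s. F (f t) < F v))"

definition ua :: "(real \<Rightarrow> real) \<Rightarrow> nat pmf \<Rightarrow> nat \<Rightarrow> real \<Rightarrow> env_state \<Rightarrow> real" where
  "ua F gA k v \<omega> = (if (\<forall>t<k-1. snd (snd (snd \<omega>)) t < v) \<and>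
       (\<forall>j<fst \<omega> - 1. Acond F v (fst (snd \<omega>) j) (fst (snd (snd \<omega>)) j))
     then v - beP F v (Pnk gA (fst \<omega>) k) else 0)"

lemma ua_meas:
  fixes M :: "real measure" and gC gA :: "nat pmf"
  assumes sM: "sets M = sets borel" and Fm: "F \<in> borel_measurable borel"
  shows "ua F gA k v \<in> borel_measurable (env gC gA M)"
proof -
  note [measurable] = Fm
  have compM[measurable]: "(\<lambda>f. f t) \<in> borel_measurable (PiM UNIV (\<lambda>_::nat. M))" for t :: nat
    by (subst measurable_cong_sets[OF refl sM, symmetric]) (rule measurable_component_singleton, simp)
  have fstm: "fst \<in> measurable (env gC gA M) (count_space UNIV)"
    using measurable_fst[of "measure_pmf gC"] unfolding env_def measurable_pmf_measure2 .
  have szm: "(\<lambda>\<omega>. fst (snd \<omega>) j) \<in> measurable (env gC gA M) (count_space UNIV)" for j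
    unfolding env_def by measurable
  have mates: "Measurable.pred (env gC gA M) (\<lambda>\<omega>. \<forall>t<k-1. snd (snd (snd \<omega>)) t < v)"
    unfolding env_def by measurable
  have Ac: "Measurable.pred (env gC gA M) (\<lambda>\<omega>. Acond F v s (fst (snd (snd \<omega>)) j))" for s j
    unfolding env_def Acond_def by measurable
  have Ac2: "Measurable.pred (env gC gA M) (\<lambda>\<omega>. Acond F v (fst (snd \<omega>) j) (fst (snd (snd \<omega>)) j))" for j
    using measurable_compose_countable[where g="\<lambda>\<omega>. fst (snd \<omega>) j" and f="\<lambda>s \<omega>. Acond F v s (fst (snd (snd \<omega>)) j)", OF Ac szm] .
  have Ac3: "Measurable.pred (env gC gA M) (\<lambda>\<omega>. \<forall>j<n - 1. Acond F v (fst (snd \<omega>) j) (fst (snd (snd \<omega>)) j))" for n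
    using Ac2 by measurable
  have Ac4: "Measurable.pred (env gC gA M) (\<lambda>\<omega>. \<forall>j<fst \<omega> - 1. Acond F v (fst (snd \<omega>) j) (fst (snd (snd \<omega>)) j))"
    using measurable_compose_countable[where g=fst and f="\<lambda>n \<omega>. \<forall>j<n - 1. Acond F v (fst (snd \<omega>) j) (fst (snd (snd \<omega>)) j)", OF Ac3 fstm] .
  have hm: "(\<lambda>\<omega>. v - beP F v (Pnk gA (fst \<omega>) k)) \<in> borel_measurable (env gC gA M)"
    using measurable_compose_countable[where g=fst and f="\<lambda>n \<omega>. v - beP F v (Pnk gA n k)", OF measurable_const fstm] by (simp only: space_borel UNIV_I)
  show ?thesis unfolding ua_def
    using mates Ac4 hm by measurable
qed

lemma ball_compr: "(\<forall>b\<in>{f j |j. P j}. R b) = (\<forall>j. P j \<longrightarrow> R (f j))" by blast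

lemma util_a_unf:
  "util_a F gA k v (nc, sz, vals, mates) =
    (if (\<forall>t<k - 1. mates t < v) \<and>
        (\<forall>j<nc - 1. beP F (Max (vals j ` {..<sz j})) (Pnk gA nc 1) < beP F v (Pnk gA nc 1))
     then v - beP F v (Pnk gA nc k) else 0)"
  unfolding util_a_def Let_def by (simp only: ball_compr prod.case) auto

lemma util_b_unf:
  "util_b F gA k v (nc, sz, vals, mates) =
    (if (\<forall>j<nc - 1. beP F (Max (vals j ` {..<sz j})) (Pnk gA (nc - 1 + k) 1) < beP F v (Pnk gA (nc - 1 + k) 1)) \<and>
        (\<forall>t<k - 1. beP F (mates t) (Pnk gA (nc - 1 + k) 1) < beP F v (Pnk gA (nc - 1 + k) 1))
     then v - beP F v (Pnk gA (nc - 1 + k) 1) else 0)"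
  unfolding util_b_def Let_def by (simp only: ball_compr ball_Un prod.case)

lemma ua_unf:
  "ua F gA k v (nc, sz, vals, mates) =
    (if (\<forall>t<k - 1. mates t < v) \<and> (\<forall>j<nc - 1. Acond F v (sz j) (vals j))
     then v - beP F v (Pnk gA nc k) else 0)"
  unfolding ua_def by (simp only: fst_conv snd_conv)

lemma Acond_iff:
  fixes F :: "real \<Rightarrow> real"
  assumes m: "mono F"
  shows "Acond F v s f \<longleftrightarrow> F (Max (f ` {..<s})) < F v"
proof (cases "s = 0")
  case True then show ?thesis by (simp add: Acond_def)
next
  case False
  have fin: "finite (f ` {..<s})" "f ` {..<s} \<noteq> {}" using False by auto
  have "F (Max (f ` {..<s})) < F v \<longleftrightarrow> (\<forall>t<s. F (f t) < F v)"
  proof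
    assume a: "F (Max (f ` {..<s})) < F v"
    show "\<forall>t<s. F (f t) < F v"
    proof (intro allI impI)
      fix t assume "t < s"
      then have "f t \<le> Max (f ` {..<s})" using fin by simp
      then have "F (f t) \<le> F (Max (f ` {..<s}))" using m by (simp add: mono_def)
      then show "F (f t) < F v" using a by simp
    qed
  next
    assume a: "\<forall>t<s. F (f t) < F v"
    have "Max (f ` {..<s}) \<in> f ` {..<s}" using fin by (rule Max_in)
    then show "F (Max (f ` {..<s})) < F v" using a by auto
  qed
  then show ?thesis using False by (simp add: Acond_def)
qed

lemma fin_Pnk: "finite (set_pmf gA) \<Longrightarrow> finite (set_pmf (Pnk gA n k))"
  unfolding Pnk_def by (simp add: fin_sum_iid)

lemma sub_Pnk: "set_pmf gA \<subseteq> {1..} \<Longrightarrow> 2 \<le> k + (n - 1) \<Longrightarrow> set_pmf (Pnk gA n k) \<subseteq> {2..}"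
  unfolding Pnk_def using ge_sum_iid by fastforce

lemma F0:
  fixes F :: "real \<Rightarrow> real"
  assumes c: "isCont F 0" and neg: "\<forall>x<0. F x = 0"
  shows "F 0 = 0"
proof -
  have "(F \<longlongrightarrow> F 0) (at_left 0)" using c by (simp add: isCont_def filterlim_at_split)
  moreover have "(F \<longlongrightarrow> 0) (at_left (0::real))"
  proof (rule tendsto_eventually)
    show "\<forall>\<^sub>F x in at_left (0::real). F x = 0"
      unfolding eventually_at_left_field using neg by (intro exI[of _ "-1"]) auto
  qed
  ultimately show ?thesis using tendsto_unique[OF trivial_limit_at_left_real] by blast
qed

theorem theorem2:
  fixes M :: "real measure" and gC gA :: "nat pmf" and kappa k :: nat and v :: real
  assumes "real_distribution M"
    and "\<forall>x. isCont (cdf M) x"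
    and "\<forall>x<0. cdf M x = 0"
    and "pmf gC 0 = 0" and "pmf gC 1 = 0"
    and "2 \<le> kappa" and "set_pmf gA \<subseteq> {1..kappa}" and "pmf gA 1 < 1"
    and "\<forall>P P' w. set_pmf P \<subseteq> {2..} \<and> set_pmf P' \<subseteq> {2..} \<and> dist_less P P' \<and> 0 < cdf M w
                 \<longrightarrow> beP (cdf M) w P < beP (cdf M) w P'"
    and "2 \<le> k"
    and "0 < cdf M v"
  shows "(\<integral>\<omega>. util_b (cdf M) gA k v \<omega> \<partial>env gC gA M)
           < (\<integral>\<omega>. util_a (cdf M) gA k v \<omega> \<partial>env gC gA M)"
proof -
  note rd = assms(1) and cont = assms(2) and neg = assms(3) and gC0 = assms(4) and gC1 = assms(5)
    and gAk = assms(7) and gA1 = assms(8) and H = assms(9) and k2 = assms(10) and Fv = assms(11)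
  interpret real_distribution M by (rule rd)
  define F where "F = cdf M"
  have c: "\<forall>x. isCont F x" using cont by (simp add: F_def)
  have m: "mono F" unfolding F_def mono_def by (simp add: cdf_nondecreasing)
  have nn: "\<forall>x. 0 \<le> F x" unfolding F_def by (simp add: cdf_nonneg)
  have ng: "\<forall>x<0. F x = 0" using neg by (simp add: F_def)
  have Fv': "0 < F v" using Fv by (simp add: F_def)
  have v0: "0 \<le> v" using ng Fv' by (metis less_irrefl not_le)
  have Fm: "F \<in> borel_measurable borel" by (rule borel_measurable_mono[OF m])
  have sM: "sets M = sets borel" by (rule events_eq_borel)
  have g1: "set_pmf gA \<subseteq> {1..}" using gAk by auto
  have fing: "finite (set_pmf gA)" using gAk by (rule finite_subset) simp
  have M2: "2 \<le> Max (set_pmf gA)"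
  proof -
    have "\<exists>x\<in>set_pmf gA. x \<noteq> 1"
    proof (rule ccontr)
      assume "\<not> ?thesis"
      then have "set_pmf gA \<subseteq> {1}" by auto
      then have "(\<Sum>x\<in>{1}. pmf gA x) = 1" by (intro sum_pmf_eq_1) auto
      then show False using gA1 by simp
    qed
    then obtain x where x: "x \<in> set_pmf gA" "x \<noteq> 1" by blast
    then have "2 \<le> x" using g1 by force
    moreover have "x \<le> Max (set_pmf gA)" using fing x by simp
    ultimately show ?thesis by simp
  qed
  have HF: "\<And>P P'. set_pmf P \<subseteq> {2..} \<Longrightarrow> set_pmf P' \<subseteq> {2..} \<Longrightarrow> dist_less P P' \<Longrightarrow> beP F v P < beP F v P'"
    using H Fv unfolding F_def by blast
  define \<beta>a where "\<beta>a n = beP F v (Pnk gA n k)" for n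
  define \<beta>b where "\<beta>b n = beP F v (Pnk gA (n - 1 + k) 1)" for n
  have ab: "\<beta>a n < \<beta>b n" if "1 \<le> n" for n
    unfolding \<beta>a_def \<beta>b_def by (rule Pnk_less[OF HF g1 fing M2 that k2])
  have bnda: "0 \<le> \<beta>a n \<and> \<beta>a n \<le> v" for n
    unfolding \<beta>a_def by (rule beP_bounds[OF c m nn v0 fin_Pnk[OF fing]])
  have bndb: "0 \<le> \<beta>b n \<and> \<beta>b n \<le> v" for n
    unfolding \<beta>b_def by (rule beP_bounds[OF c m nn v0 fin_Pnk[OF fing]])
  have bid1: "beP F x (Pnk gA n 1) < beP F v (Pnk gA n 1) \<longleftrightarrow> F x < F v" if "2 \<le> n" for x n
    by (rule beP_iff[OF c m nn ng fin_Pnk[OF fing] sub_Pnk[OF g1] Fv']) (use that in simp)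
  have bid2: "beP F x (Pnk gA (n - 1 + k) 1) < beP F v (Pnk gA (n - 1 + k) 1) \<longleftrightarrow> F x < F v" if "2 \<le> n" for x n
    by (rule beP_iff[OF c m nn ng fin_Pnk[OF fing] sub_Pnk[OF g1] Fv']) (use that k2 in simp)
  have ua_eq2: "ua F gA k v (nc, sz, vals, mates) =
      (if (\<forall>t<k - 1. mates t < v) \<and> (\<forall>j<nc - 1. F (Max (vals j ` {..<sz j})) < F v)
       then v - \<beta>a nc else 0)" for nc sz vals mates
    unfolding ua_unf \<beta>a_def by (simp add: Acond_iff[OF m])
  have ua_eq: "util_a F gA k v \<omega> = ua F gA k v \<omega>" for \<omega>
  proof -
    obtain nc sz vals mates where w: "\<omega> = (nc, sz, vals, mates)" by (cases \<omega>) auto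
    show ?thesis
    proof (cases "2 \<le> nc")
      case True
      have eqc: "(\<forall>j<nc - 1. beP F (Max (vals j ` {..<sz j})) (Pnk gA nc 1) < beP F v (Pnk gA nc 1)) =
          (\<forall>j<nc - 1. F (Max (vals j ` {..<sz j})) < F v)" using bid1[OF True] by blast
      show ?thesis unfolding w util_a_unf ua_eq2 eqc \<beta>a_def ..
    next
      case False
      then have "nc - 1 = 0" by simp
      then show ?thesis unfolding w util_a_unf ua_unf by simp
    qed
  qed
  have ub_nn: "0 \<le> util_b F gA k v \<omega>" for \<omega>
  proof -
    obtain nc sz vals mates where w: "\<omega> = (nc, sz, vals, mates)" by (cases \<omega>) auto
    show ?thesis unfolding w util_b_unf using bndb[of nc] unfolding \<beta>b_def by simp
  qed
  have ub_eq: "util_b F gA k v (nc, sz, vals, mates) =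
      (if (\<forall>j<nc - 1. F (Max (vals j ` {..<sz j})) < F v) \<and> (\<forall>t<k - 1. F (mates t) < F v)
       then v - \<beta>b nc else 0)" if "2 \<le> nc" for nc sz vals mates
  proof -
    have eqc1: "(\<forall>j<nc - 1. beP F (Max (vals j ` {..<sz j})) (Pnk gA (nc - 1 + k) 1) < beP F v (Pnk gA (nc - 1 + k) 1)) =
          (\<forall>j<nc - 1. F (Max (vals j ` {..<sz j})) < F v)" using bid2[OF that] by blast
    have eqc2: "(\<forall>t<k - 1. beP F (mates t) (Pnk gA (nc - 1 + k) 1) < beP F v (Pnk gA (nc - 1 + k) 1)) =
          (\<forall>t<k - 1. F (mates t) < F v)" using bid2[OF that] by blast
    show ?thesis unfolding util_b_unf eqc1 eqc2 \<beta>b_def ..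
  qed
  have Fmono_lt: "F x < F v \<Longrightarrow> x < v" for x
    using m by (metis mono_def not_le order.strict_iff_not)
  obtain n0 where n0: "n0 \<in> set_pmf gC" using set_pmf_not_empty by fast
  have n02: "2 \<le> n0"
  proof -
    have "n0 \<noteq> 0" using n0 gC0 set_pmf_iff by metis
    moreover have "n0 \<noteq> 1" using n0 gC1 set_pmf_iff by metis
    ultimately show ?thesis by linarith
  qed
  obtain s0 where s0: "s0 \<in> set_pmf gA" using set_pmf_not_empty by fast
  have s01: "1 \<le> s0" using s0 g1 by auto
  obtain c0 where c0: "0 < F c0" "F c0 < F v"
  proof -
    have "F 0 = 0" using F0[of F] c ng by simp
    moreover have "continuous_on {0..v} F" using c by (simp add: continuous_at_imp_continuous_on)
    ultimately obtain x where "0 \<le> x" "x \<le> v" "F x = F v / 2"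
      using IVT'[of F 0 "F v / 2" v] Fv' v0 by auto
    then have "0 < F x" "F x < F v" using Fv' by auto
    then show ?thesis by (rule that)
  qed
  define \<delta> where "\<delta> = \<beta>b n0 - \<beta>a n0"
  have \<delta>: "0 < \<delta>" unfolding \<delta>_def using ab[of n0] n02 by simp
  define PA where "PA = PiM UNIV (\<lambda>_::nat. measure_pmf gA)"
  define PV1 where "PV1 = PiM UNIV (\<lambda>_::nat. M)"
  define PV where "PV = PiM UNIV (\<lambda>_::nat. PV1)"
  have env_eq: "env gC gA M = measure_pmf gC \<Otimes>\<^sub>M (PA \<Otimes>\<^sub>M (PV \<Otimes>\<^sub>M PV1))"
    unfolding env_def PA_def PV_def PV1_def ..
  define SZ where "SZ = prod_emb UNIV (\<lambda>_::nat. measure_pmf gA) {..<n0-1} (PiE {..<n0-1} (\<lambda>_. {s0}))"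
  define VL1 where "VL1 = prod_emb UNIV (\<lambda>_::nat. M) {..<s0} (PiE {..<s0} (\<lambda>_. {..c0}))"
  define VL where "VL = prod_emb UNIV (\<lambda>_::nat. PV1) {..<n0-1} (PiE {..<n0-1} (\<lambda>_. VL1))"
  define MT where "MT = prod_emb UNIV (\<lambda>_::nat. M) {..<k-1} (PiE {..<k-1} (\<lambda>_. {..c0}))"
  define E where "E = {n0} \<times> (SZ \<times> (VL \<times> MT))"
  have memE: "nc = n0 \<and> (\<forall>j<n0-1. sz j = s0 \<and> (\<forall>t<s0. vals j t \<le> c0)) \<and> (\<forall>t<k-1. mates t \<le> c0)"
    if "(nc, sz, vals, mates) \<in> E" for nc sz vals mates
    using that unfolding E_def SZ_def VL_def VL1_def MT_def
    by (auto simp: prod_emb_def PiE_iff) (metis lessThan_iff restrict_apply')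
  have Wb_E: "(\<forall>j<nc - 1. F (Max (vals j ` {..<sz j})) < F v) \<and> (\<forall>t<k - 1. F (mates t) < F v)"
    if "(nc, sz, vals, mates) \<in> E" for nc sz vals mates
  proof -
    note mE = memE[OF that]
    have "F (Max (vals j ` {..<sz j})) < F v" if j: "j < nc - 1" for j
    proof -
      have "sz j = s0" "\<forall>t<s0. vals j t \<le> c0" using mE j by auto
      moreover have "Max (vals j ` {..<s0}) \<in> vals j ` {..<s0}" using s01 by (intro Max_in) (auto simp: lessThan_empty_iff)
      ultimately have "Max (vals j ` {..<sz j}) \<le> c0" by auto
      then show ?thesis using m c0 by (meson mono_def order.strict_trans1)
    qed
    moreover have "F (mates t) < F v" if "t < k - 1" for t
      using mE that m c0 by (meson mono_def order.strict_trans1)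
    ultimately show ?thesis by blast
  qed
  have pointwise: "util_b F gA k v \<omega> \<le> ua F gA k v \<omega> - \<delta> * indicator E \<omega>"
    if "fst \<omega> \<in> set_pmf gC" for \<omega>
  proof -
    obtain nc sz vals mates where w: "\<omega> = (nc, sz, vals, mates)" by (cases \<omega>) auto
    have nc2: "2 \<le> nc" using that gC0 gC1 unfolding w by (auto simp: set_pmf_iff) (metis less_2_cases not_le)
    show ?thesis
    proof (cases "\<omega> \<in> E")
      case True
      then have Wb: "(\<forall>j<nc - 1. F (Max (vals j ` {..<sz j})) < F v) \<and> (\<forall>t<k - 1. F (mates t) < F v)"
        using Wb_E unfolding w by blast
      have ncn: "nc = n0" using memE True unfolding w by blast
      have Wa: "\<forall>t<k - 1. mates t < v" using Wb Fmono_lt by blast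
      show ?thesis unfolding w ub_eq[OF nc2] ua_eq2 using Wb Wa True ncn unfolding w \<delta>_def by simp
    next
      case False
      show ?thesis
      proof (cases "(\<forall>j<nc - 1. F (Max (vals j ` {..<sz j})) < F v) \<and> (\<forall>t<k - 1. F (mates t) < F v)")
        case True
        have Wa: "\<forall>t<k - 1. mates t < v" using True Fmono_lt by blast
        then show ?thesis unfolding w ub_eq[OF nc2] ua_eq2 using True False ab[of nc] nc2 unfolding w by simp
      next
        case False2: False
        have "util_b F gA k v \<omega> = 0" unfolding w ub_eq[OF nc2] using False2 by (simp only: if_False)
        moreover have "0 \<le> ua F gA k v \<omega>" unfolding w ua_eq2 using bnda[of nc] by simp
        moreover have "indicator E \<omega> = (0::real)" using False by simp
        ultimately show ?thesis by simp
      qed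
    qed
  qed
  have pM: "prob_space M" using rd by (simp add: real_distribution_def)
  have pgC: "prob_space (measure_pmf gC)" by (rule prob_space_measure_pmf)
  have pPA: "prob_space PA" unfolding PA_def by (intro prob_space_PiM prob_space_measure_pmf)
  have pPV1: "prob_space PV1" unfolding PV1_def by (intro prob_space_PiM pM)
  have pPV: "prob_space PV" unfolding PV_def by (intro prob_space_PiM pPV1)
  have pR: "prob_space (PA \<Otimes>\<^sub>M (PV \<Otimes>\<^sub>M PV1))" by (intro prob_space_pair pPA pPV pPV1)
  have pR2: "prob_space (PV \<Otimes>\<^sub>M PV1)" by (intro prob_space_pair pPV pPV1)
  have pE: "prob_space (env gC gA M)" unfolding env_eq by (intro prob_space_pair pgC pR)
  interpret EP: prob_space "env gC gA M" by (rule pE)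
  interpret SR: sigma_finite_measure "PA \<Otimes>\<^sub>M (PV \<Otimes>\<^sub>M PV1)" using pR by (rule prob_space_imp_sigma_finite)
  interpret SR2: sigma_finite_measure "PV \<Otimes>\<^sub>M PV1" using pR2 by (rule prob_space_imp_sigma_finite)
  interpret SR3: sigma_finite_measure "PV1" using pPV1 by (rule prob_space_imp_sigma_finite)
  have uam: "ua F gA k v \<in> borel_measurable (env gC gA M)" by (rule ua_meas[OF sM Fm])
  have ua_bnd: "norm (ua F gA k v \<omega>) \<le> v" for \<omega>
  proof -
    obtain nc sz vals mates where w: "\<omega> = (nc, sz, vals, mates)" by (cases \<omega>) auto
    show ?thesis unfolding w ua_eq2 using bnda[of nc] v0 by auto
  qed
  have int_ua: "integrable (env gC gA M) (ua F gA k v)"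
    by (rule EP.integrable_const_bound[where B=v]) (use ua_bnd uam in auto)
  have c0s: "{..c0} \<in> sets M" using sM by simp
  have SZs: "SZ \<in> sets PA" unfolding SZ_def PA_def by (rule sets_PiM_I) auto
  have VL1s: "VL1 \<in> sets PV1" unfolding VL1_def PV1_def by (rule sets_PiM_I) (auto simp: c0s)
  have VLs: "VL \<in> sets PV" unfolding VL_def PV_def by (rule sets_PiM_I) (auto simp: VL1s)
  have MTs: "MT \<in> sets PV1" unfolding MT_def PV1_def by (rule sets_PiM_I) (auto simp: c0s)
  have Es: "E \<in> sets (env gC gA M)" unfolding E_def env_eq
    by (intro pair_measureI SZs VLs MTs) auto
  have FM: "emeasure M {..c0} = ennreal (F c0)"
    unfolding F_def cdf_def by (simp add: emeasure_eq_measure)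
  have eSZ: "emeasure PA SZ \<noteq> 0"
  proof -
    have "emeasure PA SZ = (\<Prod>i\<in>{..<n0-1}. emeasure (measure_pmf gA) {s0})"
      unfolding PA_def SZ_def by (rule emeasure_PiM_emb) (auto simp: prob_space_measure_pmf)
    moreover have "emeasure (measure_pmf gA) {s0} \<noteq> 0"
      using s0 by (simp add: emeasure_pmf_single set_pmf_iff)
    ultimately show ?thesis by simp
  qed
  have eVL1: "emeasure PV1 VL1 \<noteq> 0"
  proof -
    have "emeasure PV1 VL1 = (\<Prod>i\<in>{..<s0}. emeasure M {..c0})"
      unfolding PV1_def VL1_def by (rule emeasure_PiM_emb) (auto simp: pM c0s)
    then show ?thesis using FM c0 by simp
  qed
  have eVL: "emeasure PV VL \<noteq> 0"
  proof -
    have "emeasure PV VL = (\<Prod>i\<in>{..<n0-1}. emeasure PV1 VL1)"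
      unfolding PV_def VL_def by (rule emeasure_PiM_emb) (auto simp: pPV1 VL1s)
    then show ?thesis using eVL1 by simp
  qed
  have eMT: "emeasure PV1 MT \<noteq> 0"
  proof -
    have "emeasure PV1 MT = (\<Prod>i\<in>{..<k-1}. emeasure M {..c0})"
      unfolding PV1_def MT_def by (rule emeasure_PiM_emb) (auto simp: pM c0s)
    then show ?thesis using FM c0 by simp
  qed
  have eE: "emeasure (env gC gA M) E \<noteq> 0"
  proof -
    have "emeasure (env gC gA M) E = emeasure (measure_pmf gC) {n0} * (emeasure PA SZ * (emeasure PV VL * emeasure PV1 MT))"
      unfolding env_eq E_def
      by (simp add: SR.emeasure_pair_measure_Times SR2.emeasure_pair_measure_Times SR3.emeasure_pair_measure_Times SZs VLs MTs pair_measureI)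
    moreover have "emeasure (measure_pmf gC) {n0} \<noteq> 0"
      using n0 by (simp add: emeasure_pmf_single set_pmf_iff)
    ultimately show ?thesis using eSZ eVL eMT by simp
  qed
  have mE: "0 < measure (env gC gA M) E"
    using eE EP.emeasure_eq_measure[of E] by (metis ennreal_eq_0_iff measure_nonneg not_le order.not_eq_order_implies_strict)
  have AEfst: "AE \<omega> in env gC gA M. fst \<omega> \<in> set_pmf gC"
  proof (rule AE_I')
    let ?N = "(- set_pmf gC) \<times> space (PA \<Otimes>\<^sub>M (PV \<Otimes>\<^sub>M PV1))"
    have "- set_pmf gC \<in> null_sets (measure_pmf gC)"
      by (simp add: null_sets_def measure_pmf.emeasure_eq_measure measure_pmf_zero_iff)
    then show "?N \<in> null_sets (env gC gA M)" unfolding env_eq by (intro SR.times_in_null_sets1) auto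
    show "{\<omega> \<in> space (env gC gA M). \<not> fst \<omega> \<in> set_pmf gC} \<subseteq> ?N"
      unfolding env_eq by (auto simp: space_pair_measure)
  qed
  define f where "f \<omega> = ua F gA k v \<omega> - \<delta> * indicator E \<omega>" for \<omega>
  have int_f: "integrable (env gC gA M) f"
    unfolding f_def by (intro Bochner_Integration.integrable_diff int_ua integrable_mult_right integrable_real_indicator Es) (simp add: EP.emeasure_eq_measure)
  have AE1: "AE \<omega> in env gC gA M. util_b F gA k v \<omega> \<le> f \<omega>"
    using AEfst by eventually_elim (simp add: f_def pointwise)
  have AE2: "AE \<omega> in env gC gA M. 0 \<le> f \<omega>"
    using AE1 by eventually_elim (use ub_nn in \<open>metis order.trans\<close>)
  have "(\<integral>\<omega>. util_b F gA k v \<omega> \<partial>env gC gA M) \<le> (\<integral>\<omega>. f \<omega> \<partial>env gC gA M)"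
    by (rule integral_mono_AE'[OF int_f AE1 AE2])
  also have "(\<integral>\<omega>. f \<omega> \<partial>env gC gA M) = (\<integral>\<omega>. ua F gA k v \<omega> \<partial>env gC gA M) - \<delta> * measure (env gC gA M) E"
  proof -
    have "(\<integral>\<omega>. f \<omega> \<partial>env gC gA M) = (\<integral>\<omega>. ua F gA k v \<omega> \<partial>env gC gA M) - (\<integral>\<omega>. \<delta> * indicator E \<omega> \<partial>env gC gA M)"
      unfolding f_def by (rule Bochner_Integration.integral_diff[OF int_ua]) (intro integrable_mult_right integrable_real_indicator Es, simp add: EP.emeasure_eq_measure)
    moreover have "(\<integral>\<omega>. \<delta> * indicator E \<omega> \<partial>env gC gA M) = \<delta> * measure (env gC gA M) E"
      using Es sets.sets_into_space[OF Es] by (simp add: Int_absorb2)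
    ultimately show ?thesis by simp
  qed
  also have "\<dots> < (\<integral>\<omega>. ua F gA k v \<omega> \<partial>env gC gA M)" using \<delta> mE by simp
  also have "\<dots> = (\<integral>\<omega>. util_a F gA k v \<omega> \<partial>env gC gA M)" by (simp add: ua_eq)
  finally show ?thesis unfolding F_def .
qed

end
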